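(* Let $q$ be a prime power, $\mathcal{H}_q$ the Hermitian curve over $\mathbb{F}_{q^2}$ with $g=g(\mathcal{H}_q)=\frac{q(q-1)}{2}$, and $X,T$ fixed positive integers. Consider the $X$-secure, $T$-private PIR schemes with rate $\frac{L}{N}$, $N=L+X+T+3q^2-q-2$, obtained from the Hermitian construction for the admissible values of $L$, namely those $L$ with $L+g\equiv 0\pmod q$ for which the required points fit in $\mathcal{H}_q(\mathbb{F}_{q^2})$, i.e. $q^3+1\ge 2L+X+T+4q^2-2q$. Then the maximum rate of these schemes is $\mathcal{R}^{\mathcal{H}_q}_{\max}=\frac{L}{N}$ with $L=mq-g$ and $$m=\left\lfloor\frac{q^3-3q^2+q+1-(X+T)}{2q}\right\rfloor .$$
   Context: The Hermitian curve $\mathcal{H}_q$ is the curve over $\mathbb{F}_{q^2}$ with affine equation $X^{q+1}=Y^q+Y$; it has exactly $q^3+1$ $\mathbb{F}_{q^2}$-rational points, $P_\infty$ denotes its point at infinity and $P_0=(0,0)$. The Hermitian construction: for $L$ with $L+g\equiv 0\pmod q$, $m=(L+g)/q$, one uses $mq$ affine rational points $P_{i,z}=(\alpha_i,\beta_{i,z})$ ($\alpha_i\ne0$ distinct, $i\in[m]$, $z\in[q]$), the points $P_\infty,P_0$, and $L+X+T+\frac{7q^2-3q-6}{2}+1$ further rational points distinct from these, yielding an $X$-secure and $T$-private information retrieval scheme with $N=L+X+T+3q^2-q-2$ servers and rate $L/N$. The total number of rational points needed is $2L+X+T+4q^2-2q$. *)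

theory Defs
  imports Complex_Main "HOL-Computational_Algebra.Primes"
begin

definition prime_power_q :: "nat \<Rightarrow> bool" where
  "prime_power_q q \<longleftrightarrow> (\<exists>p k. prime p \<and> k \<ge> 1 \<and> q = p ^ k)"

definition herm_genus :: "nat \<Rightarrow> int" where
  "herm_genus q = int q * (int q - 1) div 2"

definition herm_servers :: "nat \<Rightarrow> nat \<Rightarrow> nat \<Rightarrow> int \<Rightarrow> int" where
  "herm_servers q X T L = L + int X + int T + 3 * int q ^ 2 - int q - 2"

definition herm_admissible :: "nat \<Rightarrow> nat \<Rightarrow> nat \<Rightarrow> int \<Rightarrow> bool" where
  "herm_admissible q X T L \<longleftrightarrow>
     L \<ge> 1 \<and> (L + herm_genus q) mod int q = 0 \<and>
     int q ^ 3 + 1 \<ge> 2 * L + int X + int T + 4 * int q ^ 2 - 2 * int q"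

definition herm_rate :: "nat \<Rightarrow> nat \<Rightarrow> nat \<Rightarrow> int \<Rightarrow> real" where
  "herm_rate q X T L = real_of_int L / real_of_int (herm_servers q X T L)"

definition herm_rates :: "nat \<Rightarrow> nat \<Rightarrow> nat \<Rightarrow> real set" where
  "herm_rates q X T = herm_rate q X T ` {L. herm_admissible q X T L}"

end

theory Submission
  imports Defs
begin

theorem proposition3p5:
  fixes q X T :: nat
  assumes "prime_power_q q"
    and "X \<ge> 1" and "T \<ge> 1"
    and "\<exists>L. herm_admissible q X T L"
  defines "m \<equiv> \<lfloor>(real q ^ 3 - 3 * real q ^ 2 + real q + 1 - (real X + real T)) / (2 * real q)\<rfloor>"
  defines "Lmax \<equiv> m * int q - herm_genus q"
  shows "herm_rate q X T Lmax \<in> herm_rates q X T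
         \<and> (\<forall>r \<in> herm_rates q X T. r \<le> herm_rate q X T Lmax)"
proof -
  obtain p k where pk: "prime p" "k \<ge> 1" "q = p ^ k" using assms(1) unfolding prime_power_q_def by blast
  have "p \<ge> 2" using pk(1) prime_ge_2_nat by blast
  hence "p ^ k \<ge> p ^ 1" using pk(2) by (intro power_increasing) auto
  hence q2: "q \<ge> 2" using pk \<open>p \<ge> 2\<close> by simp
  define D :: int where "D = int q ^ 3 - 3 * int q ^ 2 + int q + 1 - (int X + int T)"
  have g2: "2 * herm_genus q = int q * (int q - 1)"
    unfolding herm_genus_def by simp
  have mle: "j \<le> m \<longleftrightarrow> 2 * int q * j \<le> D" for j
  proof -
    have "j \<le> m \<longleftrightarrow> real_of_int j \<le> (real q ^ 3 - 3 * real q ^ 2 + real q + 1 - (real X + real T)) / (2 * real q)"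
      unfolding m_def by (rule le_floor_iff)
    also have "\<dots> \<longleftrightarrow> 2 * real q * real_of_int j \<le> real q ^ 3 - 3 * real q ^ 2 + real q + 1 - (real X + real T)"
      using q2 by (subst pos_le_divide_eq) (auto simp: mult.commute)
    also have "\<dots> \<longleftrightarrow> real_of_int (2 * int q * j) \<le> real_of_int D"
      unfolding D_def by simp
    finally show ?thesis by linarith
  qed
  have adm: "herm_admissible q X T L \<longleftrightarrow> L \<ge> 1 \<and> (\<exists>j. L = j * int q - herm_genus q \<and> 2 * int q * j \<le> D)" for L
  proof
    assume a: "herm_admissible q X T L"
    then obtain j where j: "L + herm_genus q = int q * j" unfolding herm_admissible_def
      by (metis mod_0_imp_dvd dvd_def)
    have "2 * int q * j = 2 * L + int q * (int q - 1)" using j g2 by (simp add: algebra_simps)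
    moreover have "L = j * int q - herm_genus q" using j by (simp add: algebra_simps)
    ultimately show "L \<ge> 1 \<and> (\<exists>j. L = j * int q - herm_genus q \<and> 2 * int q * j \<le> D)"
      using a unfolding herm_admissible_def D_def
      by (intro conjI exI[of _ j]) (auto simp: algebra_simps power2_eq_square power3_eq_cube)
  next
    assume "L \<ge> 1 \<and> (\<exists>j. L = j * int q - herm_genus q \<and> 2 * int q * j \<le> D)"
    then obtain j where L1: "L \<ge> 1" and j: "L = j * int q - herm_genus q" and jD: "2 * int q * j \<le> D" by blast
    have e: "2 * L = 2 * int q * j - int q * (int q - 1)" using j g2 by (simp add: algebra_simps)
    show "herm_admissible q X T L"
      unfolding herm_admissible_def using L1 jD e
      by (auto simp: j D_def algebra_simps power2_eq_square power3_eq_cube)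
  qed
  obtain L0 where "herm_admissible q X T L0" using assms(4) by blast
  then obtain j0 where L01: "L0 \<ge> 1" and j0: "L0 = j0 * int q - herm_genus q" and "2 * int q * j0 \<le> D"
    using adm by blast
  hence "j0 \<le> m" using mle by blast
  hence "L0 \<le> Lmax" unfolding Lmax_def j0 using q2 by (simp add: mult_right_mono)
  hence admL: "herm_admissible q X T Lmax"
    unfolding adm[of Lmax] using L01 mle[of m] Lmax_def D_def by (intro conjI exI[of _ m]) (auto simp del: of_nat_power)
  define c :: int where "c = int X + int T + 3 * int q ^ 2 - int q - 2"
  have cpos: "c > 0"
  proof -
    have "int q * int q \<ge> 2 * int q" using q2 by (intro mult_right_mono) auto
    moreover have "int X \<ge> 1" "int T \<ge> 1" "int q \<ge> 2" using q2 assms(2,3) by auto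
    ultimately show ?thesis unfolding c_def power2_eq_square by linarith
  qed
  have mono: "herm_rate q X T L \<le> herm_rate q X T Lmax" if "herm_admissible q X T L" for L
  proof -
    have "L \<ge> 1 \<and> (\<exists>j. L = j * int q - herm_genus q \<and> 2 * int q * j \<le> D)" using that adm by simp
    then obtain j where L1: "L \<ge> 1" and j: "L = j * int q - herm_genus q" and jD: "2 * int q * j \<le> D"
      by blast
    have "j \<le> m" using mle jD by blast
    hence "j * int q \<le> m * int q" by (intro mult_right_mono) auto
    hence LL: "L \<le> Lmax" unfolding Lmax_def j by linarith
    have "real_of_int L / real_of_int (L + c) \<le> real_of_int Lmax / real_of_int (Lmax + c)"
    proof -
      have "L * c \<le> Lmax * c" using LL cpos by (intro mult_right_mono) auto
      hence "L * (Lmax + c) \<le> Lmax * (L + c)" by (simp add: distrib_left mult.commute)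
      hence "real_of_int L * real_of_int (Lmax + c) \<le> real_of_int Lmax * real_of_int (L + c)"
        by (metis of_int_le_iff of_int_mult)
      moreover have "0 < real_of_int (L + c)" "0 < real_of_int (Lmax + c)" using L1 LL cpos by simp_all
      ultimately show ?thesis by (simp add: divide_le_eq le_divide_eq mult.commute)
    qed
    moreover have "herm_servers q X T L' = L' + c" for L' unfolding herm_servers_def c_def by simp
    ultimately show ?thesis unfolding herm_rate_def by simp
  qed
  show ?thesis unfolding herm_rates_def using admL mono by auto
qed

end
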